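(* Let $\mathcal{D}$ be a small category such that for every object $d$ of $\mathcal{D}$ the set of morphisms out of $d$ admits an admissible order (property (G1)), and let $G:\mathcal{C}\to\mathcal{D}$ be a faithful functor from a small category $\mathcal{C}$. Then $\mathcal{C}$ satisfies property (G1).
   Context: For a small category $\mathcal{C}$ and an object $c$, an admissible order on the morphisms out of $c$ is a choice, for every object $c'$, of a well-order $\preceq_{c'}$ on $\mathrm{Hom}(c,c')$ such that for all $f,f':c\to c'$ and $g:c'\to c''$, $f\prec_{c'}f'$ implies $g\circ f\prec_{c''}g\circ f'$. A category satisfies (G1) if the morphisms out of every object admit an admissible order. *)

theory Defs
  imports Main
begin

text \<open>Small categories: a set of objects and a set of arrows (of arbitrary HOL types),
  with domain, codomain, composition (comp g f = g o f, defined when cod f = dom g)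
  and identities.\<close>

record ('o, 'a) category =
  Obj :: "'o set"
  Arr :: "'a set"
  Dom :: "'a \<Rightarrow> 'o"
  Cod :: "'a \<Rightarrow> 'o"
  Comp :: "'a \<Rightarrow> 'a \<Rightarrow> 'a"
  Ident :: "'o \<Rightarrow> 'a"

definition Hom :: "('o, 'a) category \<Rightarrow> 'o \<Rightarrow> 'o \<Rightarrow> 'a set" where
  "Hom C x y = {f \<in> Arr C. Dom C f = x \<and> Cod C f = y}"

definition is_category :: "('o, 'a) category \<Rightarrow> bool" where
  "is_category C \<longleftrightarrow>
     (\<forall>f \<in> Arr C. Dom C f \<in> Obj C \<and> Cod C f \<in> Obj C) \<and>
     (\<forall>x \<in> Obj C. Ident C x \<in> Hom C x x) \<and>
     (\<forall>f \<in> Arr C. \<forall>g \<in> Arr C. Cod C f = Dom C g \<longrightarrow>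
         Comp C g f \<in> Hom C (Dom C f) (Cod C g)) \<and>
     (\<forall>f \<in> Arr C. Comp C f (Ident C (Dom C f)) = f \<and> Comp C (Ident C (Cod C f)) f = f) \<and>
     (\<forall>f \<in> Arr C. \<forall>g \<in> Arr C. \<forall>h \<in> Arr C. Cod C f = Dom C g \<longrightarrow> Cod C g = Dom C h \<longrightarrow>
         Comp C h (Comp C g f) = Comp C (Comp C h g) f)"

definition is_functor ::
  "('o1, 'a1) category \<Rightarrow> ('o2, 'a2) category \<Rightarrow> ('o1 \<Rightarrow> 'o2) \<Rightarrow> ('a1 \<Rightarrow> 'a2) \<Rightarrow> bool" where
  "is_functor C D Fo Fa \<longleftrightarrow>
     is_category C \<and> is_category D \<and>
     (\<forall>x \<in> Obj C. Fo x \<in> Obj D) \<and>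
     (\<forall>f \<in> Arr C. Fa f \<in> Hom D (Fo (Dom C f)) (Fo (Cod C f))) \<and>
     (\<forall>x \<in> Obj C. Fa (Ident C x) = Ident D (Fo x)) \<and>
     (\<forall>f \<in> Arr C. \<forall>g \<in> Arr C. Cod C f = Dom C g \<longrightarrow> Fa (Comp C g f) = Comp D (Fa g) (Fa f))"

definition faithful_functor ::
  "('o1, 'a1) category \<Rightarrow> ('o2, 'a2) category \<Rightarrow> ('o1 \<Rightarrow> 'o2) \<Rightarrow> ('a1 \<Rightarrow> 'a2) \<Rightarrow> bool" where
  "faithful_functor C D Fo Fa \<longleftrightarrow> is_functor C D Fo Fa \<and>
     (\<forall>x \<in> Obj C. \<forall>y \<in> Obj C. inj_on Fa (Hom C x y))"

text \<open>An admissible order on the morphisms out of c: for every object c', a well-order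
  R c' on Hom(c,c') (reflexive relation, as in HOL's well_order_on), such that strict
  inequalities are preserved by postcomposition.\<close>

definition admissible_order :: "('o, 'a) category \<Rightarrow> 'o \<Rightarrow> ('o \<Rightarrow> 'a rel) \<Rightarrow> bool" where
  "admissible_order C c R \<longleftrightarrow>
     (\<forall>c' \<in> Obj C. well_order_on (Hom C c c') (R c')) \<and>
     (\<forall>c' \<in> Obj C. \<forall>c'' \<in> Obj C. \<forall>f \<in> Hom C c c'. \<forall>f' \<in> Hom C c c'. \<forall>g \<in> Hom C c' c''.
        (f, f') \<in> R c' \<and> f \<noteq> f' \<longrightarrow>
        (Comp C g f, Comp C g f') \<in> R c'' \<and> Comp C g f \<noteq> Comp C g f')"

definition G1 :: "('o, 'a) category \<Rightarrow> bool" where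
  "G1 C \<longleftrightarrow> (\<forall>c \<in> Obj C. \<exists>R. admissible_order C c R)"

end

theory Submission
  imports Defs
begin

lemma wo_preimage:
  assumes S: "well_order_on B S" and inj: "inj_on h A" and im: "h ` A \<subseteq> B"
  shows "well_order_on A {(x,y). x \<in> A \<and> y \<in> A \<and> (h x, h y) \<in> S}"
    (is "well_order_on A ?R")
proof -
  from S have lin: "linear_order_on B S" and wfS: "wf (S - Id)"
    by (auto simp: well_order_on_def)
  have "refl_on A ?R" using lin im unfolding linear_order_on_def partial_order_on_def preorder_on_def refl_on_def
    by auto
  moreover have "trans ?R" using lin unfolding linear_order_on_def partial_order_on_def preorder_on_def trans_def
    by blast
  moreover have "antisym ?R" using lin inj unfolding linear_order_on_def partial_order_on_def antisym_def inj_on_def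
    by blast
  moreover have "total_on A ?R" using lin inj im unfolding linear_order_on_def total_on_def inj_on_def
    by blast
  moreover have "wf (?R - Id)"
  proof (rule wf_subset)
    show "wf (inv_image (S - Id) h)" using wfS by simp
    show "?R - Id \<subseteq> inv_image (S - Id) h" using inj unfolding inv_image_def inj_on_def by auto
  qed
  ultimately show ?thesis
    unfolding well_order_on_def linear_order_on_def partial_order_on_def preorder_on_def by blast
qed

theorem lemma1p16:
  fixes C :: "('o1, 'a1) category" and D :: "('o2, 'a2) category"
    and Fo :: "'o1 \<Rightarrow> 'o2" and Fa :: "'a1 \<Rightarrow> 'a2"
  assumes "is_category D"
    and "G1 D"
    and "is_category C"
    and "faithful_functor C D Fo Fa"
  shows "G1 C"
  unfolding G1_def
proof
  fix c assume c: "c \<in> Obj C"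
  have F: "is_functor C D Fo Fa" and inj: "\<And>x y. x \<in> Obj C \<Longrightarrow> y \<in> Obj C \<Longrightarrow> inj_on Fa (Hom C x y)"
    using assms(4) by (auto simp: faithful_functor_def)
  have FoO: "\<And>x. x \<in> Obj C \<Longrightarrow> Fo x \<in> Obj D" using F by (auto simp: is_functor_def)
  have FaH: "\<And>f x y. f \<in> Hom C x y \<Longrightarrow> Fa f \<in> Hom D (Fo x) (Fo y)"
    using F by (auto simp: is_functor_def Hom_def)
  have Fcomp: "\<And>f g. f \<in> Arr C \<Longrightarrow> g \<in> Arr C \<Longrightarrow> Cod C f = Dom C g \<Longrightarrow> Fa (Comp C g f) = Comp D (Fa g) (Fa f)"
    using F by (auto simp: is_functor_def)
  have Ccomp: "\<And>f g x y z. f \<in> Hom C x y \<Longrightarrow> g \<in> Hom C y z \<Longrightarrow> Comp C g f \<in> Hom C x z"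
  proof -
    have cc: "\<forall>f \<in> Arr C. \<forall>g \<in> Arr C. Cod C f = Dom C g \<longrightarrow>
         Comp C g f \<in> Hom C (Dom C f) (Cod C g)" using assms(3) unfolding is_category_def by (elim conjE)
    fix f g x y z assume "f \<in> Hom C x y" "g \<in> Hom C y z"
    then show "Comp C g f \<in> Hom C x z" using cc unfolding Hom_def by auto
  qed
  obtain RD where RD: "admissible_order D (Fo c) RD"
    using assms(2) FoO[OF c] by (auto simp: G1_def)
  define R where "R c' = {(f,f'). f \<in> Hom C c c' \<and> f' \<in> Hom C c c' \<and> (Fa f, Fa f') \<in> RD (Fo c')}" for c'
  have "admissible_order C c R"
    unfolding admissible_order_def
  proof (rule conjI; intro ballI impI)
    fix c' assume c': "c' \<in> Obj C"
    show "well_order_on (Hom C c c') (R c')"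
      unfolding R_def
      apply (rule wo_preimage[where B = "Hom D (Fo c) (Fo c')"])
      using RD FoO[OF c'] inj[OF c c'] FaH by (auto simp: admissible_order_def)
  next
    fix c' c'' f f' g
    assume c': "c' \<in> Obj C" and c'': "c'' \<in> Obj C" and f: "f \<in> Hom C c c'" and f': "f' \<in> Hom C c c'"
      and g: "g \<in> Hom C c' c''" and ff: "(f, f') \<in> R c' \<and> f \<noteq> f'"
    have r: "(Fa f, Fa f') \<in> RD (Fo c')" using ff by (simp add: R_def)
    have ne: "Fa f \<noteq> Fa f'" using ff inj[OF c c'] f f' by (auto simp: inj_on_def)
    have adm: "\<forall>c' \<in> Obj D. \<forall>c'' \<in> Obj D. \<forall>f \<in> Hom D (Fo c) c'. \<forall>f' \<in> Hom D (Fo c) c'. \<forall>g \<in> Hom D c' c''.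
        (f, f') \<in> RD c' \<and> f \<noteq> f' \<longrightarrow>
        (Comp D g f, Comp D g f') \<in> RD c'' \<and> Comp D g f \<noteq> Comp D g f'"
      using RD unfolding admissible_order_def by (elim conjE)
    have "(Comp D (Fa g) (Fa f), Comp D (Fa g) (Fa f')) \<in> RD (Fo c'') \<and> Comp D (Fa g) (Fa f) \<noteq> Comp D (Fa g) (Fa f')"
      using adm[rule_format, OF FoO[OF c'] FoO[OF c''] FaH[OF f] FaH[OF f'] FaH[OF g]] r ne by blast
    moreover have "Fa (Comp C g f) = Comp D (Fa g) (Fa f)" "Fa (Comp C g f') = Comp D (Fa g) (Fa f')"
      using Fcomp f f' g by (auto simp: Hom_def)
    moreover have "Comp C g f \<in> Hom C c c''" "Comp C g f' \<in> Hom C c c''"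
      using Ccomp f f' g by auto
    ultimately show "(Comp C g f, Comp C g f') \<in> R c'' \<and> Comp C g f \<noteq> Comp C g f'"
      unfolding R_def by auto
  qed
  then show "\<exists>R. admissible_order C c R" by blast
qed

end
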